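(* Let $(M,\Sigma)$ be a wind Riemannian structure with $\bar F$-separation $d_{\bar F}$. If $\{p_n\}$ is a sequence in $M$ and $p\in M$ is such that $d_{\bar F}(p,p_n)\to0$ or $d_{\bar F}(p_n,p)\to0$, then $p_n\to p$.
   Context: Let $M$ be a connected smooth manifold with Zermelo data $(g_R,W)$; the WRS is $\Sigma\subset TM$, $\Sigma_p=\{v\in T_pM:g_R(v-W_p,v-W_p)=1\}$. Put $g_0=g_R$, $\omega=-g_R(W,\cdot)$, $\Lambda=1-g_R(W,W)$, $h=\Lambda g_0+\omega\otimes\omega$. For $p\in M$: $A_p=T_pM\setminus\{0\}$ if $\Lambda(p)>0$; $A_p=\{v:\omega(v)<0\}$ if $\Lambda(p)=0$; $A_p=\{v:\omega(v)<0,h(v,v)>0\}$ if $\Lambda(p)<0$; $(A_E)_p=\emptyset$, $\{0_p\}$, $\{v:\omega(v)<0,h(v,v)\ge0\}$ in the three cases respectively. The extended conic Finsler metric is $\bar F:A\cup A_E\to[0,\infty)$, $\bar F(v)=g_0(v,v)/(-\omega(v)+\sqrt{\Lambda g_0(v,v)+\omega(v)^2})$, with $\bar F(0_p)=1$ when $\Lambda(p)=0$. A wind curve is a piecewise smooth curve $\gamma$ with $\gamma'\in A\cup A_E$ and $g_R(\gamma'-W,\gamma'-W)\le1$. The $\bar F$-separation is $d_{\bar F}(p,q)=\inf\int\bar F(\gamma'(s)){\rm d}s$ over wind curves $\gamma$ from $p$ to $q$ ($=+\infty$ if there are none). *)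

theory Defs
  imports "HOL-Analysis.Analysis"
begin

fun Ck_on :: "nat \<Rightarrow> 'a::euclidean_space set \<Rightarrow> ('a \<Rightarrow> 'b::real_normed_vector) \<Rightarrow> bool" where
  "Ck_on 0 S f = continuous_on S f"
| "Ck_on (Suc k) S f =
     (continuous_on S f \<and> (\<forall>x\<in>S. f differentiable (at x)) \<and>
      (\<forall>v. Ck_on k S (\<lambda>x. frechet_derivative f (at x) v)))"

definition smooth_on :: "'a::euclidean_space set \<Rightarrow> ('a \<Rightarrow> 'b::real_normed_vector) \<Rightarrow> bool" where
  "smooth_on S f \<longleftrightarrow> open S \<and> (\<forall>k. Ck_on k S f)"

definition submanifold :: "'n::euclidean_space itself \<Rightarrow> 'e::euclidean_space set \<Rightarrow> bool" where
  "submanifold _ M \<longleftrightarrow>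
     (\<forall>p\<in>M. \<exists>(U::'n set) V (\<phi>::'n \<Rightarrow> 'e).
        open U \<and> open V \<and> p \<in> V \<and> smooth_on U \<phi> \<and> \<phi> ` U = M \<inter> V \<and> inj_on \<phi> U \<and>
        continuous_on (M \<inter> V) (inv_into U \<phi>) \<and>
        (\<forall>x\<in>U. inj (frechet_derivative \<phi> (at x))))"

definition tangent_space :: "'e::euclidean_space set \<Rightarrow> 'e \<Rightarrow> 'e set" where
  "tangent_space M p =
     {v. \<exists>\<gamma> (e::real). e > 0 \<and> (\<forall>t\<in>{-e<..<e}. \<gamma> t \<in> M) \<and> \<gamma> 0 = p \<and>
          (\<gamma> has_vector_derivative v) (at 0)}"

definition smooth_fun_on :: "'e::euclidean_space set \<Rightarrow> ('e \<Rightarrow> 'b::real_normed_vector) \<Rightarrow> bool" where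
  "smooth_fun_on M f \<longleftrightarrow>
     (\<forall>p\<in>M. \<exists>V F. p \<in> V \<and> smooth_on V F \<and> (\<forall>q\<in>M \<inter> V. F q = f q))"

text \<open>g p is the Riemannian metric g_R at p (extended bilinearly to the ambient space),
  W is a smooth vector field tangent to M.\<close>

definition zermelo_data :: "'e::euclidean_space set \<Rightarrow> ('e \<Rightarrow> 'e \<Rightarrow> 'e \<Rightarrow> real) \<Rightarrow> ('e \<Rightarrow> 'e) \<Rightarrow> bool" where
  "zermelo_data M g W \<longleftrightarrow>
     (\<forall>p\<in>M. bilinear (g p) \<and> (\<forall>u v. g p u v = g p v u) \<and>
             (\<forall>v\<in>tangent_space M p. v \<noteq> 0 \<longrightarrow> g p v v > 0) \<and>
             W p \<in> tangent_space M p) \<and>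
     (\<forall>u v. smooth_fun_on M (\<lambda>p. g p u v)) \<and> smooth_fun_on M W"

definition wind_omega :: "('e \<Rightarrow> 'e \<Rightarrow> 'e \<Rightarrow> real) \<Rightarrow> ('e \<Rightarrow> 'e) \<Rightarrow> 'e \<Rightarrow> 'e \<Rightarrow> real" where
  "wind_omega g W p v = - g p (W p) v"

definition wind_Lambda :: "('e \<Rightarrow> 'e \<Rightarrow> 'e \<Rightarrow> real) \<Rightarrow> ('e \<Rightarrow> 'e) \<Rightarrow> 'e \<Rightarrow> real" where
  "wind_Lambda g W p = 1 - g p (W p) (W p)"

definition wind_h :: "('e \<Rightarrow> 'e \<Rightarrow> 'e \<Rightarrow> real) \<Rightarrow> ('e \<Rightarrow> 'e) \<Rightarrow> 'e \<Rightarrow> 'e \<Rightarrow> real" where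
  "wind_h g W p v = wind_Lambda g W p * g p v v + (wind_omega g W p v)\<^sup>2"

definition wind_A :: "'e::euclidean_space set \<Rightarrow> ('e \<Rightarrow> 'e \<Rightarrow> 'e \<Rightarrow> real) \<Rightarrow> ('e \<Rightarrow> 'e) \<Rightarrow> 'e \<Rightarrow> 'e set" where
  "wind_A M g W p =
     {v \<in> tangent_space M p.
        (if wind_Lambda g W p > 0 then v \<noteq> 0
         else if wind_Lambda g W p = 0 then wind_omega g W p v < 0
         else wind_omega g W p v < 0 \<and> wind_h g W p v > 0)}"

definition wind_AE :: "'e::euclidean_space set \<Rightarrow> ('e \<Rightarrow> 'e \<Rightarrow> 'e \<Rightarrow> real) \<Rightarrow> ('e \<Rightarrow> 'e) \<Rightarrow> 'e \<Rightarrow> 'e set" where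
  "wind_AE M g W p =
     (if wind_Lambda g W p > 0 then {}
      else if wind_Lambda g W p = 0 then {0}
      else {v \<in> tangent_space M p. wind_omega g W p v < 0 \<and> wind_h g W p v \<ge> 0})"

definition Fbar :: "('e::euclidean_space \<Rightarrow> 'e \<Rightarrow> 'e \<Rightarrow> real) \<Rightarrow> ('e \<Rightarrow> 'e) \<Rightarrow> 'e \<Rightarrow> 'e \<Rightarrow> real" where
  "Fbar g W p v =
     (if wind_Lambda g W p = 0 \<and> v = 0 then 1
      else g p v v / (- wind_omega g W p v +
                      sqrt (wind_Lambda g W p * g p v v + (wind_omega g W p v)\<^sup>2)))"

definition piecewise_smooth_on :: "real \<Rightarrow> real \<Rightarrow> real set \<Rightarrow> (real \<Rightarrow> 'e::euclidean_space) \<Rightarrow> bool" where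
  "piecewise_smooth_on a b S \<gamma> \<longleftrightarrow>
     a \<le> b \<and> finite S \<and> S \<subseteq> {a..b} \<and> continuous_on {a..b} \<gamma> \<and>
     (\<forall>s t. s \<in> S \<union> {a, b} \<and> t \<in> S \<union> {a, b} \<and> s < t \<and> {s<..<t} \<inter> S = {} \<longrightarrow>
        (\<exists>e>0. \<exists>F. smooth_on {s - e<..<t + e} F \<and> (\<forall>u\<in>{s..t}. F u = \<gamma> u)))"

definition wind_curve :: "'e::euclidean_space set \<Rightarrow> ('e \<Rightarrow> 'e \<Rightarrow> 'e \<Rightarrow> real) \<Rightarrow> ('e \<Rightarrow> 'e) \<Rightarrow>
                           (real \<Rightarrow> 'e) \<Rightarrow> real \<Rightarrow> real \<Rightarrow> bool" where
  "wind_curve M g W \<gamma> a b \<longleftrightarrow>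
     (\<exists>S. piecewise_smooth_on a b S \<gamma> \<and> (\<forall>t\<in>{a..b}. \<gamma> t \<in> M) \<and>
        (\<forall>t\<in>{a<..<b} - S.
           vector_derivative \<gamma> (at t) \<in> wind_A M g W (\<gamma> t) \<union> wind_AE M g W (\<gamma> t) \<and>
           g (\<gamma> t) (vector_derivative \<gamma> (at t) - W (\<gamma> t))
                   (vector_derivative \<gamma> (at t) - W (\<gamma> t)) \<le> 1))"

definition Fbar_sep :: "'e::euclidean_space set \<Rightarrow> ('e \<Rightarrow> 'e \<Rightarrow> 'e \<Rightarrow> real) \<Rightarrow> ('e \<Rightarrow> 'e) \<Rightarrow>
                         'e \<Rightarrow> 'e \<Rightarrow> ennreal" where
  "Fbar_sep M g W p q =
     Inf {(\<integral>\<^sup>+ s\<in>{a..b}. ennreal (Fbar g W (\<gamma> s) (vector_derivative \<gamma> (at s))) \<partial>lborel)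
          | \<gamma> a b. wind_curve M g W \<gamma> a b \<and> \<gamma> a = p \<and> \<gamma> b = q}"

end

theory Submission
  imports Defs
begin


lemma path_length_bound:
  fixes f :: "real \<Rightarrow> 'a::euclidean_space"
  assumes S: "finite S" and cd: "c \<le> d"
    and der: "\<And>x. x \<in> {c<..<d} - S \<Longrightarrow> (f has_vector_derivative f' x) (at x)"
    and cont: "continuous_on {c..d} f"
  shows "ennreal (norm (f d - f c)) \<le> (\<integral>\<^sup>+x\<in>{c..d}. ennreal (norm (f' x)) \<partial>lborel)"
proof (cases "(\<integral>\<^sup>+x\<in>{c..d}. ennreal (norm (f' x)) \<partial>lborel) = \<infinity>")
  case True
  then show ?thesis by simp
next
  case False
  have I: "(f' has_integral (f d - f c)) {c..d}"
    by (rule fundamental_theorem_of_calculus_interior_strong[OF S cd der cont])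
  then have intf: "f' integrable_on {c..d}" by blast
  have meas: "f' \<in> borel_measurable (lebesgue_on {c..d})"
    using integrable_imp_measurable[OF intf] .
  have eq: "(\<integral>\<^sup>+x. ennreal (norm (f' x)) \<partial>lebesgue_on {c..d}) = (\<integral>\<^sup>+x\<in>{c..d}. ennreal (norm (f' x)) \<partial>lborel)"
    by (simp add: nn_integral_restrict_space nn_integral_completion)
  have "integrable (lebesgue_on {c..d}) f'"
    apply (rule integrableI_bounded[OF meas])
    using eq False by (simp add: less_top)
  then have "integrable (lebesgue_on {c..d}) (norm \<circ> f')"
    by (simp add: o_def)
  then have "f' absolutely_integrable_on {c..d}"
    using absolutely_integrable_measurable[of "{c..d}" f'] meas by simp
  then have intn: "(\<lambda>x. norm (f' x)) integrable_on {c..d}"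
    using \<open>f' absolutely_integrable_on {c..d}\<close> unfolding absolutely_integrable_on_def by blast
  have "norm (f d - f c) = norm (integral {c..d} f')"
    using I by (simp add: integral_unique)
  also have "\<dots> \<le> integral {c..d} (\<lambda>x. norm (f' x))"
    by (rule integral_norm_bound_integral[OF intf intn]) simp
  finally have le: "norm (f d - f c) \<le> integral {c..d} (\<lambda>x. norm (f' x))" .
  have "(\<integral>\<^sup>+x\<in>{c..d}. ennreal (norm (f' x)) \<partial>lborel) = ennreal (integral {c..d} (\<lambda>x. norm (f' x)))"
    by (rule nn_integral_has_integral_lebesgue') (use intn in auto)
  then show ?thesis using ennreal_leI[OF le] by simp
qed



lemma smooth_on_diff:
  assumes "smooth_on S F" "x \<in> S"
  shows "F differentiable (at x)"
proof -
  have "Ck_on (Suc 0) S F" using assms(1) unfolding smooth_on_def by blast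
  then show ?thesis using assms(2) by simp
qed

lemma smooth_on_cont:
  assumes "smooth_on S F"
  shows "continuous_on S F" "open S"
proof -
  have "Ck_on 0 S F" using assms(1) unfolding smooth_on_def by blast
  then show "continuous_on S F" by simp
  show "open S" using assms unfolding smooth_on_def by blast
qed

lemma smooth_on_deriv_cont:
  assumes "smooth_on S F"
  shows "continuous_on S (\<lambda>x. frechet_derivative F (at x) v)"
proof -
  have "Ck_on (Suc 0) S F" using assms(1) unfolding smooth_on_def by blast
  then show ?thesis by simp
qed

lemma smooth_fun_on_cont:
  assumes "smooth_fun_on M f"
  shows "continuous_on M f"
proof (rule continuous_on_eq_continuous_within[THEN iffD2], intro ballI)
  fix p assume p: "p \<in> M"
  obtain V F where VF: "p \<in> V" "smooth_on V F" "\<forall>q\<in>M \<inter> V. F q = f q"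
    using assms p unfolding smooth_fun_on_def by blast
  have oV: "open V" and cF: "continuous_on V F" using smooth_on_cont[OF VF(2)] by auto
  have "isCont F p" using cF oV VF(1) continuous_on_eq_continuous_at by blast
  then have "(F \<longlongrightarrow> F p) (at p within M)"
    using continuous_at_imp_continuous_within continuous_within by blast
  moreover have "eventually (\<lambda>q. F q = f q) (at p within M)"
    unfolding eventually_at_topological using oV VF by blast
  ultimately have "(f \<longlongrightarrow> F p) (at p within M)"
    using tendsto_cong by blast
  then show "continuous (at p within M) f"
    using VF(3) p VF(1) by (simp add: continuous_within)
qed

lemma piecewise_deriv:
  assumes ps: "piecewise_smooth_on a b S \<gamma>" and t: "t \<in> {a<..<b} - S"
  shows "(\<gamma> has_vector_derivative vector_derivative \<gamma> (at t)) (at t)"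
proof -
  let ?P = "S \<union> {a, b}"
  have fin: "finite ?P" using ps unfolding piecewise_smooth_on_def by auto
  define s where "s = Max {x \<in> ?P. x < t}"
  define u where "u = Min {x \<in> ?P. t < x}"
  have ne1: "{x \<in> ?P. x < t} \<noteq> {}" using t by auto
  have ne2: "{x \<in> ?P. t < x} \<noteq> {}" using t by auto
  have s: "s \<in> ?P" "s < t" using Max_in[OF _ ne1] fin unfolding s_def by auto
  have u: "u \<in> ?P" "t < u" using Min_in[OF _ ne2] fin unfolding u_def by auto
  have gap: "{s<..<u} \<inter> S = {}"
  proof (rule ccontr)
    assume "{s<..<u} \<inter> S \<noteq> {}"
    then obtain x where x: "x \<in> S" "s < x" "x < u" by auto
    have "x \<noteq> t" using t x by auto
    then show False
    proof (cases "x < t")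
      case True
      then have "x \<le> s" unfolding s_def using fin x by (intro Max_ge) auto
      then show False using x by simp
    next
      case False
      then have "t < x" using \<open>x \<noteq> t\<close> by simp
      then have "u \<le> x" unfolding u_def using fin x by (intro Min_le) auto
      then show False using x by simp
    qed
  qed
  obtain e F where eF: "e > 0" "smooth_on {s - e<..<u + e} F" "\<forall>v\<in>{s..u}. F v = \<gamma> v"
    using ps s u gap unfolding piecewise_smooth_on_def by (metis (no_types, lifting) less_trans)
  have "F differentiable (at t)"
    using smooth_on_diff[OF eF(2)] s u eF(1) by auto
  then obtain F' where F': "(F has_derivative F') (at t)" unfolding differentiable_def by blast
  have "(\<gamma> has_derivative F') (at t)"
    apply (rule has_derivative_transform_within_open[OF F', of "{s<..<u}"])
    using s u eF(3) by auto
  then have "\<gamma> differentiable (at t)" unfolding differentiable_def by blast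
  then show ?thesis using vector_derivative_works by blast
qed



lemma small_pos_zero:
  fixes a K :: real
  assumes "a \<ge> 0" "K \<ge> 0" "c > 0" "\<And>\<epsilon>. 0 < \<epsilon> \<Longrightarrow> \<epsilon> \<le> c \<Longrightarrow> a \<le> \<epsilon> * K"
  shows "a = 0"
proof (rule ccontr)
  assume "a \<noteq> 0"
  then have a: "a > 0" using assms by simp
  define \<epsilon> where "\<epsilon> = min c (a / (2 * (K + 1)))"
  have "\<epsilon> > 0" using a assms unfolding \<epsilon>_def by auto
  moreover have "\<epsilon> \<le> c" unfolding \<epsilon>_def by simp
  ultimately have "a \<le> \<epsilon> * K" using assms by blast
  also have "\<epsilon> * K \<le> (a / (2 * (K + 1))) * K"
    using assms(2) unfolding \<epsilon>_def by (intro mult_right_mono) auto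
  also have "\<dots> = a * (K / (2 * (K + 1)))" by simp
  also have "\<dots> < a * 1"
  proof (rule mult_strict_left_mono[OF _ a])
    show "K / (2 * (K + 1)) < 1" using assms(2) by (simp add: divide_less_eq)
  qed
  also have "a * 1 = a" by simp
  finally show False by simp
qed

lemma tangent_in_range:
  fixes \<phi> :: "'n::euclidean_space \<Rightarrow> 'e::euclidean_space"
  assumes sm: "smooth_on U \<phi>" and img: "\<phi> ` U = M \<inter> V" and oV: "open V"
    and inj: "inj_on \<phi> U" and cinv: "continuous_on (M \<inter> V) (inv_into U \<phi>)"
    and x: "x \<in> U" and injD: "inj (frechet_derivative \<phi> (at x))"
    and v: "v \<in> tangent_space M (\<phi> x)"
  shows "v \<in> range (frechet_derivative \<phi> (at x))"
proof -
  define D where "D = frechet_derivative \<phi> (at x)"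
  have hasD: "(\<phi> has_derivative D) (at x)"
    using smooth_on_diff[OF sm x] frechet_derivative_works unfolding D_def by blast
  have linD: "linear D" using has_derivative_linear[OF hasD] .
  obtain B where B: "B > 0" "\<And>w. B * norm w \<le> norm (D w)"
    using linear_inj_bounded_below_pos[OF linD] injD unfolding D_def by blast
  obtain L where L: "linear L" "L \<circ> D = id"
    using linear_injective_left_inverse[OF linD] injD unfolding D_def by blast
  define P where "P = (\<lambda>z. z - D (L z))"
  have linP: "linear P" unfolding P_def
    using L(1) linD by (intro linear_compose_sub linear_ident linear_compose[of L D, unfolded o_def]) auto
  have PD: "P (D w) = 0" for w
    using L(2) unfolding P_def by (metis comp_apply id_apply diff_self)
  obtain C where C: "C > 0" "\<And>z. norm (P z) \<le> C * norm z"
    using linear_bounded_pos[OF linP] by blast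
  obtain \<gamma> e where ge: "e > 0" "\<forall>t\<in>{-e<..<e}. \<gamma> t \<in> M" "\<gamma> 0 = \<phi> x"
      "(\<gamma> has_vector_derivative v) (at 0)"
    using v unfolding tangent_space_def by blast
  have gder: "(\<gamma> has_derivative (\<lambda>t. t *\<^sub>R v)) (at 0)"
    using ge(4) unfolding has_vector_derivative_def .
  define \<psi> where "\<psi> = inv_into U \<phi>"
  have \<psi>x: "\<psi> (\<phi> x) = x" unfolding \<psi>_def using inv_into_f_f[OF inj x] .
  have \<phi>xMV: "\<phi> x \<in> M \<inter> V" using img x by blast
  obtain r where r: "r > 0" "ball (\<phi> x) r \<subseteq> V"
    using oV \<phi>xMV open_contains_ball by blast
  have main: "norm (P v) \<le> \<epsilon> * (C * (2 / B) * (norm v + 1) + C)"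
    if \<epsilon>: "0 < \<epsilon>" "\<epsilon> \<le> B / 2" "\<epsilon> \<le> 1" for \<epsilon>
  proof -
    obtain d where d: "d > 0" "\<And>y. norm (y - x) < d \<Longrightarrow> norm (\<phi> y - \<phi> x - D (y - x)) \<le> \<epsilon> * norm (y - x)"
      using hasD \<epsilon>(1) unfolding has_derivative_at_alt by blast
    obtain d' where d': "d' > 0" "\<And>z. z \<in> M \<inter> V \<Longrightarrow> dist z (\<phi> x) < d' \<Longrightarrow> dist (\<psi> z) x < d"
      using cinv \<phi>xMV d(1) \<psi>x unfolding continuous_on_iff \<psi>_def by metis
    obtain d1 where d1: "d1 > 0" "\<And>t. norm (t - 0) < d1 \<Longrightarrow> norm (\<gamma> t - \<gamma> 0 - (t - 0) *\<^sub>R v) \<le> \<epsilon> * norm (t - 0)"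
      using gder \<epsilon>(1) unfolding has_derivative_at_alt by blast
    define X where "X = min r d' / (2 * (norm v + 1))"
    define Y where "Y = min (min e d1) X"
    define t where "t = Y / 2"
    have np2: "2 * (norm v + 1) > 0" by (simp add: add_nonneg_pos)
    have X0: "X > 0" unfolding X_def using r(1) d'(1) np2 by simp
    have Y0: "Y > 0" unfolding Y_def using X0 ge(1) d1(1) by simp
    have t0: "t > 0" unfolding t_def using Y0 by simp
    have YX: "Y \<le> X" "Y \<le> e" "Y \<le> d1" unfolding Y_def by auto
    have te: "t < e" "t < d1" using YX Y0 unfolding t_def by auto
    have "t \<le> X" using YX Y0 unfolding t_def by simp
    then have "t * (2 * (norm v + 1)) \<le> min r d'"
      unfolding X_def using pos_le_divide_eq[OF np2] by blast
    moreover have "t * (2 * (norm v + 1)) = 2 * (t * (norm v + 1))" by simp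
    moreover have "t * (norm v + 1) > 0" using t0 by (simp add: add_nonneg_pos)
    ultimately have tvr: "t * (norm v + 1) < min r d'" by linarith
    have approx: "norm (\<gamma> t - \<gamma> 0 - t *\<^sub>R v) \<le> \<epsilon> * t"
      using d1(2)[of t] te t0 by simp
    have gdist: "norm (\<gamma> t - \<gamma> 0) \<le> t * (norm v + 1)"
    proof -
      have "norm (\<gamma> t - \<gamma> 0) \<le> norm (t *\<^sub>R v) + norm (\<gamma> t - \<gamma> 0 - t *\<^sub>R v)"
        by (metis add.commute diff_add_cancel norm_triangle_ineq)
      also have "\<dots> \<le> t * norm v + \<epsilon> * t" using approx t0 by simp
      also have "\<dots> \<le> t * (norm v + 1)" using \<epsilon>(3) t0 by (simp add: algebra_simps)
      finally show ?thesis .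
    qed
    have gM: "\<gamma> t \<in> M" using ge(2) te t0 by auto
    have gV: "\<gamma> t \<in> V" using r(2) gdist tvr ge(3) by (auto simp: dist_norm norm_minus_commute)
    have gd': "dist (\<gamma> t) (\<phi> x) < d'" using gdist tvr ge(3) by (auto simp: dist_norm)
    define y where "y = \<psi> (\<gamma> t)"
    have gimg: "\<gamma> t \<in> \<phi> ` U" using gM gV img by blast
    have yU: "y \<in> U" unfolding y_def \<psi>_def using gimg by (simp add: inv_into_into)
    have \<phi>y: "\<phi> y = \<gamma> t" unfolding y_def \<psi>_def using gimg by (simp add: f_inv_into_f)
    have yd: "norm (y - x) < d" using d'(2)[OF _ gd'] gM gV unfolding y_def by (simp add: dist_norm)
    have R: "norm (\<phi> y - \<phi> x - D (y - x)) \<le> \<epsilon> * norm (y - x)" using d(2)[OF yd] .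
    have lowerlip: "B / 2 * norm (y - x) \<le> norm (\<gamma> t - \<gamma> 0)"
    proof -
      have "B * norm (y - x) \<le> norm (D (y - x))" using B(2) .
      also have "\<dots> \<le> norm (\<phi> y - \<phi> x) + norm (\<phi> y - \<phi> x - D (y - x))"
        by (metis add.commute diff_add_cancel norm_triangle_ineq4 norm_minus_commute
            norm_triangle_ineq order_trans diff_diff_eq2)
      also have "\<dots> \<le> norm (\<phi> y - \<phi> x) + \<epsilon> * norm (y - x)" using R by simp
      finally have "(B - \<epsilon>) * norm (y - x) \<le> norm (\<phi> y - \<phi> x)" by (simp add: algebra_simps)
      moreover have "B / 2 * norm (y - x) \<le> (B - \<epsilon>) * norm (y - x)"
        using \<epsilon>(2) by (intro mult_right_mono) auto
      ultimately show ?thesis using \<phi>y ge(3) by simp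
    qed
    have "P (\<gamma> t - \<gamma> 0) = P (\<phi> y - \<phi> x - D (y - x))"
      using \<phi>y ge(3) PD linear_diff[OF linP] by simp
    then have "norm (P (\<gamma> t - \<gamma> 0)) \<le> C * (\<epsilon> * norm (y - x))"
      using C(2) R C(1) by (metis mult_left_mono less_imp_le order_trans)
    also have "\<dots> \<le> C * (\<epsilon> * ((2 / B) * norm (\<gamma> t - \<gamma> 0)))"
      using lowerlip B(1) C(1) \<epsilon>(1) by (intro mult_left_mono) (auto simp: field_simps)
    also have "\<dots> \<le> C * (\<epsilon> * ((2 / B) * (t * (norm v + 1))))"
      using gdist B(1) C(1) \<epsilon>(1) by (intro mult_left_mono) auto
    finally have P1: "norm (P (\<gamma> t - \<gamma> 0)) \<le> C * (\<epsilon> * ((2 / B) * (t * (norm v + 1))))" .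
    have "t *\<^sub>R P v = P (\<gamma> t - \<gamma> 0) - P (\<gamma> t - \<gamma> 0 - t *\<^sub>R v)"
      using linear_diff[OF linP] linear_scale[OF linP] by simp
    then have "t * norm (P v) \<le> norm (P (\<gamma> t - \<gamma> 0)) + norm (P (\<gamma> t - \<gamma> 0 - t *\<^sub>R v))"
      using t0 by (metis abs_of_pos norm_scaleR norm_triangle_ineq4)
    also have "\<dots> \<le> C * (\<epsilon> * ((2 / B) * (t * (norm v + 1)))) + C * (\<epsilon> * t)"
    proof (rule add_mono[OF P1])
      have "C * norm (\<gamma> t - \<gamma> 0 - t *\<^sub>R v) \<le> C * (\<epsilon> * t)"
        using approx C(1) by (intro mult_left_mono) auto
      then show "norm (P (\<gamma> t - \<gamma> 0 - t *\<^sub>R v)) \<le> C * (\<epsilon> * t)"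
        using C(2)[of "\<gamma> t - \<gamma> 0 - t *\<^sub>R v"] by linarith
    qed
    also have "\<dots> = t * (\<epsilon> * (C * (2 / B) * (norm v + 1) + C))"
      by (simp add: algebra_simps add_divide_distrib)
    finally show ?thesis using t0 by simp
  qed
  have "norm (P v) = 0"
  proof (rule small_pos_zero[of _ "C * (2 / B) * (norm v + 1) + C" "min (B/2) 1"])
    show "0 \<le> C * (2 / B) * (norm v + 1) + C" using C(1) B(1) by (simp add: add_nonneg_nonneg)
    show "0 < min (B / 2) 1" using B(1) by simp
    fix \<epsilon> :: real assume "0 < \<epsilon>" "\<epsilon> \<le> min (B / 2) 1"
    then show "norm (P v) \<le> \<epsilon> * (C * (2 / B) * (norm v + 1) + C)" using main by simp
  qed simp
  then have "v = D (L v)" unfolding P_def by simp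
  then show ?thesis unfolding D_def by blast
qed



lemma bilinear_expand:
  fixes h :: "'a::euclidean_space \<Rightarrow> 'a \<Rightarrow> real"
  assumes bh: "bilinear h"
  shows "h a b = (\<Sum>i\<in>Basis. \<Sum>j\<in>Basis. (a \<bullet> i) * (b \<bullet> j) * h i j)"
proof -
  have "h a b = h (\<Sum>i\<in>Basis. (a \<bullet> i) *\<^sub>R i) (\<Sum>j\<in>Basis. (b \<bullet> j) *\<^sub>R j)"
    by (simp add: euclidean_representation)
  also have "\<dots> = (\<Sum>(i,j)\<in>Basis \<times> Basis. h ((a \<bullet> i) *\<^sub>R i) ((b \<bullet> j) *\<^sub>R j))"
    by (rule bilinear_sum[OF bh])
  also have "\<dots> = (\<Sum>(i,j)\<in>Basis \<times> Basis. (a \<bullet> i) * (b \<bullet> j) * h i j)"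
    by (simp add: bilinear_lmul[OF bh] bilinear_rmul[OF bh] mult_ac)
  also have "\<dots> = (\<Sum>i\<in>Basis. \<Sum>j\<in>Basis. (a \<bullet> i) * (b \<bullet> j) * h i j)"
    by (simp add: sum.cartesian_product)
  finally show ?thesis .
qed

lemma bilinear_bound:
  fixes h :: "'a::euclidean_space \<Rightarrow> 'a \<Rightarrow> real"
  assumes bh: "bilinear h"
  shows "\<bar>h a b\<bar> \<le> (\<Sum>i\<in>Basis. \<Sum>j\<in>Basis. \<bar>h i j\<bar>) * norm a * norm b"
proof -
  have "\<bar>h a b\<bar> \<le> (\<Sum>i\<in>Basis. \<bar>\<Sum>j\<in>Basis. (a \<bullet> i) * (b \<bullet> j) * h i j\<bar>)"
    unfolding bilinear_expand[OF bh, of a b] by (rule sum_abs)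
  also have "\<dots> \<le> (\<Sum>i\<in>Basis. \<Sum>j\<in>Basis. \<bar>(a \<bullet> i) * (b \<bullet> j) * h i j\<bar>)"
    by (intro sum_mono sum_abs)
  also have "\<dots> \<le> (\<Sum>i\<in>Basis. \<Sum>j\<in>Basis. norm a * norm b * \<bar>h i j\<bar>)"
  proof (intro sum_mono)
    fix i j :: 'a assume ij: "i \<in> Basis" "j \<in> Basis"
    have "\<bar>a \<bullet> i\<bar> * \<bar>b \<bullet> j\<bar> \<le> norm a * norm b"
      using Basis_le_norm[OF ij(1), of a] Basis_le_norm[OF ij(2), of b]
      by (intro mult_mono) auto
    then show "\<bar>(a \<bullet> i) * (b \<bullet> j) * h i j\<bar> \<le> norm a * norm b * \<bar>h i j\<bar>"
      by (simp add: abs_mult mult_right_mono)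
  qed
  also have "\<dots> = (\<Sum>i\<in>Basis. \<Sum>j\<in>Basis. \<bar>h i j\<bar>) * norm a * norm b"
    by (simp add: sum_distrib_left sum_distrib_right mult.commute mult.left_commute)
  finally show ?thesis .
qed

lemma zd_cont:
  assumes zd: "zermelo_data M g W"
  shows "continuous_on M (\<lambda>q. g q u v)" "continuous_on M W"
  using zd smooth_fun_on_cont unfolding zermelo_data_def by blast+

lemma upper_bounds:
  fixes g :: "'e::euclidean_space \<Rightarrow> 'e \<Rightarrow> 'e \<Rightarrow> real"
  assumes zd: "zermelo_data M g W" and p: "p \<in> M"
  shows "\<exists>R>0. \<exists>K>0. \<forall>q\<in>M. dist q p < R \<longrightarrow>
           (\<forall>a b. \<bar>g q a b\<bar> \<le> K * norm a * norm b) \<and> norm (W q) \<le> K"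
proof -
  define N where "N q = (\<Sum>i\<in>Basis. \<Sum>j\<in>Basis. \<bar>g q i j\<bar>)" for q
  have cN: "continuous_on M N" unfolding N_def
    by (intro continuous_intros zd_cont[OF zd])
  have cW: "continuous_on M W" using zd_cont[OF zd] by blast
  obtain d1 where d1: "d1 > 0" "\<And>q. q \<in> M \<Longrightarrow> dist q p < d1 \<Longrightarrow> dist (N q) (N p) < 1"
    using cN p unfolding continuous_on_iff by (metis zero_less_one)
  obtain d2 where d2: "d2 > 0" "\<And>q. q \<in> M \<Longrightarrow> dist q p < d2 \<Longrightarrow> dist (W q) (W p) < 1"
    using cW p unfolding continuous_on_iff by (metis zero_less_one)
  define K where "K = \<bar>N p\<bar> + norm (W p) + 1"
  have K0: "K > 0" unfolding K_def by (simp add: add_nonneg_pos)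
  have bil: "\<And>q. q \<in> M \<Longrightarrow> bilinear (g q)" using zd unfolding zermelo_data_def by blast
  have H: "\<forall>q\<in>M. dist q p < min d1 d2 \<longrightarrow>
           (\<forall>a b. \<bar>g q a b\<bar> \<le> K * norm a * norm b) \<and> norm (W q) \<le> K"
  proof (intro ballI impI conjI allI)
    fix q assume q: "q \<in> M" "dist q p < min d1 d2"
    have "\<bar>N q - N p\<bar> < 1" using d1(2)[OF q(1)] q(2) unfolding dist_real_def by auto
    then have NK: "N q \<le> K" unfolding K_def using norm_ge_zero[of "W p"] by linarith
    fix a b
    show "\<bar>g q a b\<bar> \<le> K * norm a * norm b"
    proof -
      have "\<bar>g q a b\<bar> \<le> N q * norm a * norm b"
        using bilinear_bound[OF bil[OF q(1)], of a b] unfolding N_def .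
      also have "\<dots> \<le> K * norm a * norm b"
        using NK by (intro mult_right_mono) auto
      finally show ?thesis .
    qed
  next
    fix q assume q: "q \<in> M" "dist q p < min d1 d2"
    have "dist (W q) (W p) < 1" using d2(2)[OF q(1)] q(2) by simp
    then have "norm (W q) \<le> norm (W p) + 1"
      using norm_triangle_sub[of "W q" "W p"] unfolding dist_norm by linarith
    then show "norm (W q) \<le> K" unfolding K_def by simp
  qed
  have "min d1 d2 > 0" using d1 d2 by simp
  then show ?thesis using H K0 by blast
qed



lemma chart_tangent:
  fixes \<phi> :: "'n::euclidean_space \<Rightarrow> 'e::euclidean_space"
  assumes sm: "smooth_on U \<phi>" and img: "\<phi> ` U \<subseteq> M" and x: "x \<in> U"
  shows "frechet_derivative \<phi> (at x) w \<in> tangent_space M (\<phi> x)"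
proof -
  define D where "D = frechet_derivative \<phi> (at x)"
  have oU: "open U" using smooth_on_cont[OF sm] by blast
  have hasD: "(\<phi> has_derivative D) (at x)"
    using smooth_on_diff[OF sm x] frechet_derivative_works unfolding D_def by blast
  have linD: "linear D" using has_derivative_linear[OF hasD] .
  obtain e' where e': "e' > 0" "ball x e' \<subseteq> U" using oU x open_contains_ball by blast
  define e where "e = e' / (norm w + 1)"
  have np: "norm w + 1 > 0" by (simp add: add_nonneg_pos)
  have e0: "e > 0" unfolding e_def using e' np by simp
  define \<gamma> where "\<gamma> t = \<phi> (x + t *\<^sub>R w)" for t
  have inU: "x + t *\<^sub>R w \<in> U" if "t \<in> {-e<..<e}" for t
  proof -
    have "\<bar>t\<bar> < e" using that by auto
    then have "\<bar>t\<bar> * (norm w + 1) < e'" unfolding e_def using np by (simp add: pos_less_divide_eq)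
    moreover have "\<bar>t\<bar> * norm w \<le> \<bar>t\<bar> * (norm w + 1)" by (simp add: mult_left_mono)
    ultimately have "norm (t *\<^sub>R w) < e'" by simp
    then show ?thesis using e'(2) by (auto simp: dist_norm)
  qed
  have lin: "((\<lambda>t. x + t *\<^sub>R w) has_derivative (\<lambda>t. t *\<^sub>R w)) (at 0)"
    by (auto intro!: derivative_eq_intros)
  have hasD0: "(\<phi> has_derivative D) (at (x + 0 *\<^sub>R w))" using hasD by simp
  have "((\<phi> \<circ> (\<lambda>t. x + t *\<^sub>R w)) has_derivative (D \<circ> (\<lambda>t. t *\<^sub>R w))) (at 0)"
    by (rule diff_chain_at[OF lin hasD0])
  moreover have "D \<circ> (\<lambda>t. t *\<^sub>R w) = (\<lambda>t. t *\<^sub>R D w)"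
    using linear_scale[OF linD] by (auto simp: o_def)
  ultimately have "(\<gamma> has_vector_derivative D w) (at 0)"
    unfolding has_vector_derivative_def \<gamma>_def by (simp add: o_def)
  moreover have "\<forall>t\<in>{-e<..<e}. \<gamma> t \<in> M" using inU img unfolding \<gamma>_def by blast
  moreover have "\<gamma> 0 = \<phi> x" unfolding \<gamma>_def by simp
  ultimately show ?thesis unfolding tangent_space_def D_def using e0 by blast
qed



lemma uniform_pos:
  fixes M :: "'e::euclidean_space set" and g :: "'e \<Rightarrow> 'e \<Rightarrow> 'e \<Rightarrow> real"
  assumes sub: "submanifold TYPE('n::euclidean_space) M" and zd: "zermelo_data M g W" and p: "p \<in> M"
  shows "\<exists>R>0. \<exists>m>0. \<forall>q\<in>M. \<forall>v. dist q p < R \<longrightarrow> v \<in> tangent_space M q \<longrightarrow> m * (norm v)\<^sup>2 \<le> g q v v"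
proof -
  obtain U V and \<phi> :: "'n \<Rightarrow> 'e" where ch: "open U" "open V" "p \<in> V" "smooth_on U \<phi>"
      "\<phi> ` U = M \<inter> V" "inj_on \<phi> U" "continuous_on (M \<inter> V) (inv_into U \<phi>)"
      "\<forall>x\<in>U. inj (frechet_derivative \<phi> (at x))"
    using bspec[OF sub[unfolded submanifold_def] p] by (elim exE conjE) blast
  define \<psi> where "\<psi> = inv_into U \<phi>"
  have pimg: "p \<in> \<phi> ` U" using ch p by blast
  define x0 where "x0 = \<psi> p"
  have x0U: "x0 \<in> U" unfolding x0_def \<psi>_def using pimg by (simp add: inv_into_into)
  have \<phi>x0: "\<phi> x0 = p" unfolding x0_def \<psi>_def using pimg by (simp add: f_inv_into_f)
  obtain \<rho> where \<rho>: "\<rho> > 0" "cball x0 \<rho> \<subseteq> U" using ch(1) x0U open_contains_cball by blast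
  define D where "D x = frechet_derivative \<phi> (at x)" for x
  have linD: "linear (D x)" if "x \<in> U" for x
  proof -
    have "(\<phi> has_derivative D x) (at x)"
      using smooth_on_diff[OF ch(4) that] frechet_derivative_works unfolding D_def by blast
    then show ?thesis using has_derivative_linear by blast
  qed
  have cDk: "continuous_on U (\<lambda>x. D x k)" for k
    unfolding D_def by (rule smooth_on_deriv_cont[OF ch(4)])
  have Dexp: "D x w = (\<Sum>k\<in>Basis. (w \<bullet> k) *\<^sub>R D x k)" if "x \<in> U" for x w
  proof -
    have "D x w = D x (\<Sum>k\<in>Basis. (w \<bullet> k) *\<^sub>R k)" by (simp add: euclidean_representation)
    also have "\<dots> = (\<Sum>k\<in>Basis. (w \<bullet> k) *\<^sub>R D x k)"
      using linD[OF that] by (simp add: linear_sum linear_scale)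
    finally show ?thesis .
  qed
  have \<phi>M: "\<phi> ` U \<subseteq> M" using ch(5) by blast
  have c\<phi>: "continuous_on U \<phi>" using smooth_on_cont[OF ch(4)] by blast
  have cD2: "continuous_on (U \<times> UNIV) (\<lambda>z. D (fst z) k)" for k
    by (rule continuous_on_compose2[OF cDk continuous_on_fst]) auto
  have cG: "continuous_on U (\<lambda>x. g (\<phi> x) i j)" for i j
    by (rule continuous_on_compose2[OF zd_cont(1)[OF zd] c\<phi> \<phi>M])
  have cG2: "continuous_on (U \<times> UNIV) (\<lambda>z. g (\<phi> (fst z)) i j)" for i j
    by (rule continuous_on_compose2[OF cG continuous_on_fst]) auto
  define E where "E z = (\<Sum>k\<in>Basis. (snd z \<bullet> k) *\<^sub>R D (fst z) k)" for z :: "'n \<times> 'n"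
  define F where "F z = (\<Sum>i\<in>Basis. \<Sum>j\<in>Basis. (E z \<bullet> i) * (E z \<bullet> j) * g (\<phi> (fst z)) i j)" for z
  have cE: "continuous_on (U \<times> UNIV) E" unfolding E_def
    by (intro continuous_intros cD2)
  have cF: "continuous_on (U \<times> UNIV) F" unfolding F_def
    by (intro continuous_intros cE cG2)
  have bil: "\<And>q. q \<in> M \<Longrightarrow> bilinear (g q)" using zd unfolding zermelo_data_def by blast
  have Eeq: "E (x, w) = D x w" if "x \<in> U" for x w
    unfolding E_def fst_conv snd_conv by (rule Dexp[OF that, symmetric])
  have Feq: "F (x, w) = g (\<phi> x) (D x w) (D x w)" if "x \<in> U" for x w
  proof -
    have gx: "bilinear (g (\<phi> x))" using bil \<phi>M that by blast
    show ?thesis unfolding F_def Eeq[OF that] fst_conv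
      by (rule bilinear_expand[OF gx, symmetric])
  qed
  define Kc where "Kc = cball x0 \<rho> \<times> sphere (0::'n) 1"
  have cK: "compact Kc" unfolding Kc_def by (intro compact_Times compact_cball compact_sphere)
  obtain b :: 'n where b: "b \<in> Basis" using nonempty_Basis by blast
  have neK: "Kc \<noteq> {}" unfolding Kc_def using b \<rho>(1) by (auto intro!: exI[of _ x0] exI[of _ b])
  have KU: "Kc \<subseteq> U \<times> UNIV" unfolding Kc_def using \<rho>(2) by auto
  obtain zm where zm: "zm \<in> Kc" "\<forall>z\<in>Kc. F zm \<le> F z"
    using continuous_attains_inf[OF cK neK continuous_on_subset[OF cF KU]] by blast
  obtain zM where zM: "zM \<in> Kc" "\<forall>z\<in>Kc. norm (E z) \<le> norm (E zM)"
    using continuous_attains_sup[OF cK neK continuous_on_subset[OF continuous_on_norm[OF cE] KU]] by blast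
  define m0 where "m0 = F zm"
  define Bd where "Bd = norm (E zM) + 1"
  have Bd0: "Bd > 0" unfolding Bd_def by (simp add: add_nonneg_pos)
  have m0pos: "m0 > 0"
  proof -
    obtain xm wm where zmeq: "zm = (xm, wm)" by fastforce
    have xm: "xm \<in> U" and wm: "norm wm = 1" using zm(1) \<rho>(2) unfolding zmeq Kc_def by auto
    have "D xm wm \<noteq> 0"
    proof
      assume "D xm wm = 0"
      then have "wm = 0"
        using linear_injective_0[OF linD[OF xm]] ch(8) xm unfolding D_def by blast
      then show False using wm by simp
    qed
    moreover have "D xm wm \<in> tangent_space M (\<phi> xm)"
      unfolding D_def by (rule chart_tangent[OF ch(4) \<phi>M xm])
    moreover have "\<phi> xm \<in> M" using \<phi>M xm by blast
    ultimately have "g (\<phi> xm) (D xm wm) (D xm wm) > 0"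
      using zd unfolding zermelo_data_def by blast
    then show ?thesis unfolding m0_def zmeq using Feq[OF xm] by simp
  qed
  define m where "m = m0 / Bd\<^sup>2"
  have mpos: "m > 0" unfolding m_def using m0pos Bd0 by simp
  have key: "m * (norm (D x w))\<^sup>2 \<le> g (\<phi> x) (D x w) (D x w)" if x: "x \<in> cball x0 \<rho>" for x w
  proof (cases "w = 0")
    case True
    have xU: "x \<in> U" using x \<rho>(2) by blast
    then show ?thesis using True linear_0[OF linD[OF xU]] bilinear_lmul[OF bil[of "\<phi> x"], of 0] \<phi>M
      by auto
  next
    case False
    have xU: "x \<in> U" using x \<rho>(2) by blast
    define u where "u = w /\<^sub>R norm w"
    have nw: "norm w > 0" using False by simp
    have uK: "(x, u) \<in> Kc" unfolding Kc_def u_def using x False by simp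
    have wu: "w = norm w *\<^sub>R u" unfolding u_def using False by simp
    have Dw: "D x w = norm w *\<^sub>R D x u"
      by (subst wu) (simp add: linear_scale[OF linD[OF xU]])
    have gq: "bilinear (g (\<phi> x))" using bil \<phi>M xU by blast
    have geq: "g (\<phi> x) (D x w) (D x w) = (norm w)\<^sup>2 * F (x, u)"
      unfolding Dw Feq[OF xU] bilinear_lmul[OF gq] bilinear_rmul[OF gq]
      by (simp add: power2_eq_square)
    have Fu: "m0 \<le> F (x, u)" unfolding m0_def using zm(2) uK by blast
    have Du: "norm (D x u) \<le> Bd" using zM(2) uK Eeq[OF xU] unfolding Bd_def by force
    have "norm (D x w) \<le> norm w * Bd" unfolding Dw using Du nw by (simp add: mult_left_mono)
    then have "(norm (D x w))\<^sup>2 \<le> (norm w * Bd)\<^sup>2" by (simp add: power_mono)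
    then have "m * (norm (D x w))\<^sup>2 \<le> m * (norm w * Bd)\<^sup>2" using mpos by (simp add: mult_left_mono)
    also have "\<dots> = m0 * (norm w)\<^sup>2" unfolding m_def using Bd0 by (simp add: power_mult_distrib)
    also have "\<dots> \<le> F (x, u) * (norm w)\<^sup>2" using Fu by (simp add: mult_right_mono)
    finally show ?thesis unfolding geq by (simp add: mult.commute)
  qed
  have \<psi>p: "\<psi> p = x0" unfolding x0_def ..
  have pMV: "p \<in> M \<inter> V" using p ch(3) by blast
  obtain d' where d': "d' > 0" "\<And>z. z \<in> M \<inter> V \<Longrightarrow> dist z p < d' \<Longrightarrow> dist (\<psi> z) x0 < \<rho>"
    using ch(7) pMV \<rho>(1) \<psi>p unfolding continuous_on_iff \<psi>_def by metis
  obtain r where r: "r > 0" "ball p r \<subseteq> V" using ch(2) ch(3) open_contains_ball by blast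
  have "\<forall>q\<in>M. \<forall>v. dist q p < min d' r \<longrightarrow> v \<in> tangent_space M q \<longrightarrow> m * (norm v)\<^sup>2 \<le> g q v v"
  proof (intro ballI allI impI)
    fix q v assume q: "q \<in> M" "dist q p < min d' r" and v: "v \<in> tangent_space M q"
    have qV: "q \<in> V" using r(2) q(2) by (auto simp: dist_commute)
    have qimg: "q \<in> \<phi> ` U" using q(1) qV ch(5) by blast
    define x where "x = \<psi> q"
    have xU: "x \<in> U" unfolding x_def \<psi>_def using qimg by (simp add: inv_into_into)
    have \<phi>x: "\<phi> x = q" unfolding x_def \<psi>_def using qimg by (simp add: f_inv_into_f)
    have "dist x x0 < \<rho>" unfolding x_def using d'(2)[of q] q qV by simp
    then have xc: "x \<in> cball x0 \<rho>" by (simp add: dist_commute)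
    have "v \<in> range (D x)"
      unfolding D_def
      by (rule tangent_in_range[OF ch(4) ch(5) ch(2) ch(6) ch(7) xU]) (use ch(8) xU v \<phi>x in auto)
    then obtain w where "v = D x w" by blast
    then show "m * (norm v)\<^sup>2 \<le> g q v v" using key[OF xc, of w] \<phi>x by simp
  qed
  moreover have "min d' r > 0" using d' r by simp
  ultimately show ?thesis using mpos by blast
qed



lemma Fbar_lower:
  fixes g :: "'e::euclidean_space \<Rightarrow> 'e \<Rightarrow> 'e \<Rightarrow> real"
  assumes bil: "bilinear (g q)"
    and gb: "\<forall>a b. \<bar>g q a b\<bar> \<le> K * norm a * norm b" and Wb: "norm (W q) \<le> K" and K0: "K > 0"
    and pos: "\<forall>v\<in>tangent_space M q. m * (norm v)\<^sup>2 \<le> g q v v" and m0: "m > 0"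
    and v: "v \<in> wind_A M g W q \<union> wind_AE M g W q"
  shows "m / (K * K + sqrt ((1 + K * K * K) * K + (K * K)\<^sup>2)) * norm v \<le> Fbar g W q v"
proof -
  define C where "C = K * K + sqrt ((1 + K * K * K) * K + (K * K)\<^sup>2)"
  have C0: "C > 0" unfolding C_def using K0 by (simp add: add_pos_nonneg)
  define \<Lambda> where "\<Lambda> = wind_Lambda g W q"
  define \<omega> where "\<omega> = wind_omega g W q v"
  define G where "G = g q v v"
  show ?thesis
  proof (cases "v = 0")
    case True
    have "Fbar g W q v \<ge> 0"
      unfolding Fbar_def True using bilinear_lzero[OF bil] by simp
    then show ?thesis using True by simp
  next
    case False
    have tang: "v \<in> tangent_space M q"
      using v False unfolding wind_A_def wind_AE_def by (auto split: if_splits)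
    have Gm: "m * (norm v)\<^sup>2 \<le> G" using pos tang unfolding G_def by blast
    have "m * (norm v)\<^sup>2 > 0" using m0 False by simp
    then have Gpos: "G > 0" using Gm by linarith
    have GK: "G \<le> K * (norm v)\<^sup>2" using gb unfolding G_def by (auto simp: power2_eq_square abs_le_iff mult.assoc)
    have \<omega>b: "\<bar>\<omega>\<bar> \<le> K * K * norm v"
    proof -
      have "\<bar>\<omega>\<bar> \<le> K * norm (W q) * norm v" using gb unfolding \<omega>_def wind_omega_def by simp
      also have "\<dots> \<le> K * K * norm v" using Wb K0 by (intro mult_right_mono) auto
      finally show ?thesis .
    qed
    have \<Lambda>b: "\<bar>\<Lambda>\<bar> \<le> 1 + K * K * K"
    proof -
      have "\<bar>g q (W q) (W q)\<bar> \<le> K * norm (W q) * norm (W q)" using gb by blast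
      also have "\<dots> \<le> K * K * K" using Wb K0 by (intro mult_mono) auto
      finally show ?thesis unfolding \<Lambda>_def wind_Lambda_def by linarith
    qed
    have hnn: "\<Lambda> * G + \<omega>\<^sup>2 \<ge> 0"
    proof (cases "\<Lambda> < 0")
      case True
      then have "wind_h g W q v \<ge> 0"
        using v unfolding wind_A_def wind_AE_def \<Lambda>_def by (auto split: if_splits)
      then show ?thesis unfolding wind_h_def \<Lambda>_def G_def \<omega>_def by simp
    next
      case False
      then show ?thesis using Gpos by simp
    qed
    define den where "den = - \<omega> + sqrt (\<Lambda> * G + \<omega>\<^sup>2)"
    have denpos: "den > 0"
    proof (cases "\<Lambda> > 0")
      case True
      then have "\<Lambda> * G + \<omega>\<^sup>2 > \<omega>\<^sup>2" using Gpos by simp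
      then have "sqrt (\<Lambda> * G + \<omega>\<^sup>2) > sqrt (\<omega>\<^sup>2)" by (simp only: real_sqrt_less_iff)
      then have "sqrt (\<Lambda> * G + \<omega>\<^sup>2) > \<bar>\<omega>\<bar>" by simp
      then show ?thesis unfolding den_def by linarith
    next
      case False
      then have "\<omega> < 0"
        using v \<open>v \<noteq> 0\<close> unfolding wind_A_def wind_AE_def \<Lambda>_def \<omega>_def by (auto split: if_splits)
      moreover have "sqrt (\<Lambda> * G + \<omega>\<^sup>2) \<ge> 0" using hnn by simp
      ultimately show ?thesis unfolding den_def by linarith
    qed
    have denb: "den \<le> C * norm v"
    proof -
      have "\<Lambda> * G + \<omega>\<^sup>2 \<le> \<bar>\<Lambda>\<bar> * G + \<omega>\<^sup>2" using Gpos by (simp add: mult_right_mono)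
      also have "\<dots> \<le> (1 + K * K * K) * (K * (norm v)\<^sup>2) + (K * K * norm v)\<^sup>2"
      proof (intro add_mono mult_mono \<Lambda>b GK)
        show "\<omega>\<^sup>2 \<le> (K * K * norm v)\<^sup>2"
          using \<omega>b by (metis abs_ge_zero power2_abs power_mono)
      qed (use Gpos K0 in auto)
      also have "\<dots> = ((1 + K * K * K) * K + (K * K)\<^sup>2) * (norm v)\<^sup>2"
        by (simp add: algebra_simps power2_eq_square)
      finally have "sqrt (\<Lambda> * G + \<omega>\<^sup>2) \<le> sqrt (((1 + K * K * K) * K + (K * K)\<^sup>2) * (norm v)\<^sup>2)"
        by (simp only: real_sqrt_le_iff)
      also have "\<dots> = sqrt ((1 + K * K * K) * K + (K * K)\<^sup>2) * norm v"
        by (simp add: real_sqrt_mult)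
      finally have "sqrt (\<Lambda> * G + \<omega>\<^sup>2) \<le> sqrt ((1 + K * K * K) * K + (K * K)\<^sup>2) * norm v" .
      moreover have "- \<omega> \<le> K * K * norm v" using \<omega>b by linarith
      ultimately show ?thesis unfolding den_def C_def by (simp add: algebra_simps)
    qed
    have Feq: "Fbar g W q v = G / den"
      unfolding Fbar_def den_def G_def \<omega>_def \<Lambda>_def using False by simp
    have nv: "norm v > 0" using False by simp
    have "m / C * norm v = (m * (norm v)\<^sup>2) / (C * norm v)"
      using nv by (simp add: power2_eq_square)
    also have "\<dots> \<le> G / (C * norm v)"
      using Gm C0 nv by (intro divide_right_mono) auto
    also have "\<dots> \<le> G / den"
      using Gpos denpos denb by (intro divide_left_mono) auto
    finally show ?thesis unfolding Feq C_def .
  qed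
qed

lemma exit_fwd:
  fixes h :: "real \<Rightarrow> real"
  assumes c: "continuous_on {a..b} h" and ab: "a \<le> b" and ha: "h a \<le> r" and hb: "r \<le> h b"
  shows "\<exists>\<tau>\<in>{a..b}. h \<tau> = r \<and> (\<forall>t\<in>{a..\<tau>}. h t \<le> r)"
proof -
  define T where "T = {t \<in> {a..b}. h t = r}"
  have Tne: "T \<noteq> {}" using IVT'[of h a r b, OF ha hb ab c] unfolding T_def by auto
  have Tcl: "closed T" unfolding T_def by (rule continuous_closed_preimage_constant[OF c]) simp
  have Tbdd: "bdd_below T" unfolding T_def by (rule bdd_belowI[of _ a]) auto
  define \<tau> where "\<tau> = Inf T"
  have \<tau>T: "\<tau> \<in> T" unfolding \<tau>_def by (rule closed_contains_Inf[OF Tne Tbdd Tcl])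
  have \<tau>le: "\<tau> \<le> s" if "s \<in> T" for s unfolding \<tau>_def using that Tbdd by (rule cInf_lower)
  have "\<forall>t\<in>{a..\<tau>}. h t \<le> r"
  proof (rule ballI, rule ccontr)
    fix t assume t: "t \<in> {a..\<tau>}" and "\<not> h t \<le> r"
    then have htr: "h t > r" by simp
    have tb: "t \<le> b" using t \<tau>T unfolding T_def by auto
    have c': "continuous_on {a..t} h" by (rule continuous_on_subset[OF c]) (use tb in auto)
    obtain s where s: "a \<le> s" "s \<le> t" "h s = r" using IVT'[of h a r t, OF ha _ _ c'] htr t by auto
    have "s \<in> T" unfolding T_def using s tb by auto
    then have "\<tau> \<le> s" by (rule \<tau>le)
    then have "t = s" using s t by auto
    then show False using s htr by simp
  qed
  then show ?thesis using \<tau>T unfolding T_def by blast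
qed

lemma exit_bwd:
  fixes h :: "real \<Rightarrow> real"
  assumes c: "continuous_on {a..b} h" and ab: "a \<le> b" and hb: "h b \<le> r" and ha: "r \<le> h a"
  shows "\<exists>\<sigma>\<in>{a..b}. h \<sigma> = r \<and> (\<forall>t\<in>{\<sigma>..b}. h t \<le> r)"
proof -
  have c': "continuous_on {-b..-a} (\<lambda>t. h (- t))"
    by (rule continuous_on_compose2[OF c continuous_on_minus[OF continuous_on_id]]) auto
  obtain \<tau> where \<tau>: "\<tau> \<in> {-b..-a}" "h (- \<tau>) = r" "\<forall>t\<in>{-b..\<tau>}. h (- t) \<le> r"
    using exit_fwd[OF c', of r] ab hb ha by auto
  have "\<forall>t\<in>{-\<tau>..b}. h t \<le> r"
  proof
    fix t assume "t \<in> {-\<tau>..b}"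
    then have "- t \<in> {-b..\<tau>}" by auto
    then show "h t \<le> r" using \<tau>(3) by fastforce
  qed
  then show ?thesis using \<tau> by (intro bexI[of _ "- \<tau>"]) auto
qed

lemma curve_bound:
  fixes \<gamma> :: "real \<Rightarrow> 'e::euclidean_space"
  assumes wc: "wind_curve M g W \<gamma> a b" and cd: "a \<le> c" "c \<le> d" "d \<le> b" and \<kappa>: "\<kappa> > 0"
    and bnd: "\<forall>t\<in>{c..d}. \<forall>v \<in> wind_A M g W (\<gamma> t) \<union> wind_AE M g W (\<gamma> t). \<kappa> * norm v \<le> Fbar g W (\<gamma> t) v"
  shows "ennreal (\<kappa> * norm (\<gamma> d - \<gamma> c)) \<le>
           (\<integral>\<^sup>+ s\<in>{a..b}. ennreal (Fbar g W (\<gamma> s) (vector_derivative \<gamma> (at s))) \<partial>lborel)"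
proof -
  obtain S where S: "piecewise_smooth_on a b S \<gamma>" "\<forall>t\<in>{a..b}. \<gamma> t \<in> M"
    "\<forall>t\<in>{a<..<b} - S. vector_derivative \<gamma> (at t) \<in> wind_A M g W (\<gamma> t) \<union> wind_AE M g W (\<gamma> t) \<and>
           g (\<gamma> t) (vector_derivative \<gamma> (at t) - W (\<gamma> t)) (vector_derivative \<gamma> (at t) - W (\<gamma> t)) \<le> 1"
    using wc unfolding wind_curve_def by blast
  have finS: "finite S" and cab: "continuous_on {a..b} \<gamma>" using S(1) unfolding piecewise_smooth_on_def by auto
  define f where "f t = \<kappa> *\<^sub>R \<gamma> t" for t
  define f' where "f' t = \<kappa> *\<^sub>R vector_derivative \<gamma> (at t)" for t
  have der: "(f has_vector_derivative f' x) (at x)" if "x \<in> {c<..<d} - S" for x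
  proof -
    have "x \<in> {a<..<b} - S" using that cd by auto
    then have "(\<gamma> has_vector_derivative vector_derivative \<gamma> (at x)) (at x)"
      by (rule piecewise_deriv[OF S(1)])
    then have "((\<lambda>t. \<kappa> *\<^sub>R \<gamma> t) has_vector_derivative
        (\<kappa> *\<^sub>R vector_derivative \<gamma> (at x) + 0 *\<^sub>R \<gamma> x)) (at x)"
      by (rule has_vector_derivative_scaleR[OF DERIV_const])
    then show ?thesis unfolding f_def f'_def by simp
  qed
  have cf: "continuous_on {c..d} f" unfolding f_def
    by (intro continuous_intros continuous_on_subset[OF cab]) (use cd in auto)
  have A: "ennreal (norm (f d - f c)) \<le> (\<integral>\<^sup>+x\<in>{c..d}. ennreal (norm (f' x)) \<partial>lborel)"
    by (rule path_length_bound[OF finS cd(2) der cf])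
  have E: "norm (f d - f c) = \<kappa> * norm (\<gamma> d - \<gamma> c)"
    unfolding f_def using \<kappa> by (simp flip: scaleR_diff_right)
  have B: "(\<integral>\<^sup>+x\<in>{c..d}. ennreal (norm (f' x)) \<partial>lborel) \<le>
           (\<integral>\<^sup>+ s\<in>{a..b}. ennreal (Fbar g W (\<gamma> s) (vector_derivative \<gamma> (at s))) \<partial>lborel)"
  proof (rule nn_integral_mono_AE)
    have "AE x in lborel. x \<notin> S \<union> {a, b, c, d}"
      by (rule AE_not_in) (use finS in \<open>auto intro: finite_imp_null_set_lborel\<close>)
    then show "AE x in lborel. ennreal (norm (f' x)) * indicator {c..d} x \<le>
        ennreal (Fbar g W (\<gamma> x) (vector_derivative \<gamma> (at x))) * indicator {a..b} x"
    proof (rule AE_mp, intro AE_I2 impI)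
      fix x assume x: "x \<notin> S \<union> {a, b, c, d}"
      show "ennreal (norm (f' x)) * indicator {c..d} x \<le>
        ennreal (Fbar g W (\<gamma> x) (vector_derivative \<gamma> (at x))) * indicator {a..b} x"
      proof (cases "x \<in> {c..d}")
        case True
        then have xab: "x \<in> {a<..<b} - S" "x \<in> {a..b}" using x cd by auto
        have "vector_derivative \<gamma> (at x) \<in> wind_A M g W (\<gamma> x) \<union> wind_AE M g W (\<gamma> x)"
          using S(3) xab by blast
        then have "\<kappa> * norm (vector_derivative \<gamma> (at x)) \<le> Fbar g W (\<gamma> x) (vector_derivative \<gamma> (at x))"
          using bnd True by blast
        then have "ennreal (norm (f' x)) \<le> ennreal (Fbar g W (\<gamma> x) (vector_derivative \<gamma> (at x)))"
          unfolding f'_def using \<kappa> by (intro ennreal_leI) simp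
        then show ?thesis using True xab by simp
      next
        case False
        then show ?thesis by simp
      qed
    qed
  qed
  have "ennreal (\<kappa> * norm (\<gamma> d - \<gamma> c)) = ennreal (norm (f d - f c))" using E by simp
  also have "\<dots> \<le> (\<integral>\<^sup>+x\<in>{c..d}. ennreal (norm (f' x)) \<partial>lborel)" by (rule A)
  also have "\<dots> \<le> (\<integral>\<^sup>+ s\<in>{a..b}. ennreal (Fbar g W (\<gamma> s) (vector_derivative \<gamma> (at s))) \<partial>lborel)"
    by (rule B)
  finally show ?thesis .
qed



theorem proposition3p10:
  fixes M :: "'e::euclidean_space set"
    and g :: "'e \<Rightarrow> 'e \<Rightarrow> 'e \<Rightarrow> real" and W :: "'e \<Rightarrow> 'e"
    and pn :: "nat \<Rightarrow> 'e" and p :: 'e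
  assumes "submanifold TYPE('n::euclidean_space) M"
    and "connected M"
    and "zermelo_data M g W"
    and "p \<in> M" and "\<forall>n. pn n \<in> M"
    and "((\<lambda>n. Fbar_sep M g W p (pn n)) \<longlonglongrightarrow> 0) \<or>
         ((\<lambda>n. Fbar_sep M g W (pn n) p) \<longlonglongrightarrow> 0)"
  shows "pn \<longlonglongrightarrow> p"
proof -
  note sub = assms(1) and zd = assms(3) and p = assms(4)
  obtain R1 m where R1: "R1 > 0" "m > 0"
    "\<forall>q\<in>M. \<forall>v. dist q p < R1 \<longrightarrow> v \<in> tangent_space M q \<longrightarrow> m * (norm v)\<^sup>2 \<le> g q v v"
    using uniform_pos[OF sub zd p] by blast
  obtain R2 K where R2: "R2 > 0" "K > 0"
    "\<forall>q\<in>M. dist q p < R2 \<longrightarrow> (\<forall>a b. \<bar>g q a b\<bar> \<le> K * norm a * norm b) \<and> norm (W q) \<le> K"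
    using upper_bounds[OF zd p] by blast
  define R where "R = min R1 R2"
  have R0: "R > 0" unfolding R_def using R1 R2 by simp
  define C where "C = K * K + sqrt ((1 + K * K * K) * K + (K * K)\<^sup>2)"
  have C0: "C > 0" unfolding C_def using R2(2) by (simp add: add_pos_nonneg)
  define \<kappa> where "\<kappa> = m / C"
  have \<kappa>0: "\<kappa> > 0" unfolding \<kappa>_def using R1(2) C0 by simp
  have bil: "\<And>q. q \<in> M \<Longrightarrow> bilinear (g q)" using zd unfolding zermelo_data_def by blast
  have bnd: "\<kappa> * norm v \<le> Fbar g W q v"
    if q: "q \<in> M" "dist q p < R" and v: "v \<in> wind_A M g W q \<union> wind_AE M g W q" for q v
  proof -
    have d1: "dist q p < R1" and d2: "dist q p < R2" using q(2) unfolding R_def by auto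
    show ?thesis unfolding \<kappa>_def C_def
    proof (rule Fbar_lower[OF bil[OF q(1)] _ _ R2(2) _ R1(2) v])
      show "\<forall>a b. \<bar>g q a b\<bar> \<le> K * norm a * norm b" using R2(3) q(1) d2 by blast
      show "norm (W q) \<le> K" using R2(3) q(1) d2 by blast
      show "\<forall>v\<in>tangent_space M q. m * (norm v)\<^sup>2 \<le> g q v v" using R1(3) q(1) d1 by blast
    qed
  qed
  have curve_facts: "a \<le> b" "continuous_on {a..b} \<gamma>" "\<forall>t\<in>{a..b}. \<gamma> t \<in> M"
    if "wind_curve M g W \<gamma> a b" for \<gamma> a b
    using that unfolding wind_curve_def piecewise_smooth_on_def by auto
  have fwd: "dist q p < r"
    if r: "0 < r" "r < R" and lt: "Fbar_sep M g W p q < ennreal (\<kappa> * r)" for q r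
  proof (rule ccontr)
    assume "\<not> dist q p < r"
    then have qr: "r \<le> dist q p" by simp
    obtain \<gamma> a b where wc: "wind_curve M g W \<gamma> a b" "\<gamma> a = p" "\<gamma> b = q"
      and I: "(\<integral>\<^sup>+ s\<in>{a..b}. ennreal (Fbar g W (\<gamma> s) (vector_derivative \<gamma> (at s))) \<partial>lborel) < ennreal (\<kappa> * r)"
      using lt unfolding Fbar_sep_def Inf_less_iff by blast
    note cf = curve_facts[OF wc(1)]
    define h where "h t = dist (\<gamma> t) p" for t
    have ch: "continuous_on {a..b} h" unfolding h_def by (intro continuous_intros cf(2))
    obtain \<tau> where \<tau>: "\<tau> \<in> {a..b}" "h \<tau> = r" "\<forall>t\<in>{a..\<tau>}. h t \<le> r"
      using exit_fwd[OF ch cf(1), of r] r(1) qr wc(2,3) unfolding h_def by auto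
    have "ennreal (\<kappa> * norm (\<gamma> \<tau> - \<gamma> a)) \<le>
           (\<integral>\<^sup>+ s\<in>{a..b}. ennreal (Fbar g W (\<gamma> s) (vector_derivative \<gamma> (at s))) \<partial>lborel)"
    proof (rule curve_bound[OF wc(1) order_refl _ _ \<kappa>0])
      show "a \<le> \<tau>" "\<tau> \<le> b" using \<tau>(1) by auto
      show "\<forall>t\<in>{a..\<tau>}. \<forall>v\<in>wind_A M g W (\<gamma> t) \<union> wind_AE M g W (\<gamma> t). \<kappa> * norm v \<le> Fbar g W (\<gamma> t) v"
      proof (intro ballI)
        fix t v assume t: "t \<in> {a..\<tau>}" and v: "v \<in> wind_A M g W (\<gamma> t) \<union> wind_AE M g W (\<gamma> t)"
        have "\<gamma> t \<in> M" using cf(3) t \<tau>(1) by auto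
        moreover have "dist (\<gamma> t) p < R" using \<tau>(3) t r(2) unfolding h_def by fastforce
        ultimately show "\<kappa> * norm v \<le> Fbar g W (\<gamma> t) v" using bnd v by blast
      qed
    qed
    moreover have "norm (\<gamma> \<tau> - \<gamma> a) = r" using \<tau>(2) wc(2) unfolding h_def by (simp add: dist_norm)
    ultimately show False using I by simp
  qed
  have bwd: "dist q p < r"
    if r: "0 < r" "r < R" and lt: "Fbar_sep M g W q p < ennreal (\<kappa> * r)" for q r
  proof (rule ccontr)
    assume "\<not> dist q p < r"
    then have qr: "r \<le> dist q p" by simp
    obtain \<gamma> a b where wc: "wind_curve M g W \<gamma> a b" "\<gamma> a = q" "\<gamma> b = p"
      and I: "(\<integral>\<^sup>+ s\<in>{a..b}. ennreal (Fbar g W (\<gamma> s) (vector_derivative \<gamma> (at s))) \<partial>lborel) < ennreal (\<kappa> * r)"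
      using lt unfolding Fbar_sep_def Inf_less_iff by blast
    note cf = curve_facts[OF wc(1)]
    define h where "h t = dist (\<gamma> t) p" for t
    have ch: "continuous_on {a..b} h" unfolding h_def by (intro continuous_intros cf(2))
    obtain \<sigma> where \<sigma>: "\<sigma> \<in> {a..b}" "h \<sigma> = r" "\<forall>t\<in>{\<sigma>..b}. h t \<le> r"
      using exit_bwd[OF ch cf(1), of r] r(1) qr wc(2,3) unfolding h_def by auto
    have "ennreal (\<kappa> * norm (\<gamma> b - \<gamma> \<sigma>)) \<le>
           (\<integral>\<^sup>+ s\<in>{a..b}. ennreal (Fbar g W (\<gamma> s) (vector_derivative \<gamma> (at s))) \<partial>lborel)"
    proof (rule curve_bound[OF wc(1) _ _ order_refl \<kappa>0])
      show "a \<le> \<sigma>" "\<sigma> \<le> b" using \<sigma>(1) by auto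
      show "\<forall>t\<in>{\<sigma>..b}. \<forall>v\<in>wind_A M g W (\<gamma> t) \<union> wind_AE M g W (\<gamma> t). \<kappa> * norm v \<le> Fbar g W (\<gamma> t) v"
      proof (intro ballI)
        fix t v assume t: "t \<in> {\<sigma>..b}" and v: "v \<in> wind_A M g W (\<gamma> t) \<union> wind_AE M g W (\<gamma> t)"
        have "\<gamma> t \<in> M" using cf(3) t \<sigma>(1) by auto
        moreover have "dist (\<gamma> t) p < R" using \<sigma>(3) t r(2) unfolding h_def by fastforce
        ultimately show "\<kappa> * norm v \<le> Fbar g W (\<gamma> t) v" using bnd v by blast
      qed
    qed
    moreover have "norm (\<gamma> b - \<gamma> \<sigma>) = r" using \<sigma>(2) wc(3) unfolding h_def
      by (simp add: dist_norm norm_minus_commute)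
    ultimately show False using I by simp
  qed
  show ?thesis
  proof (rule tendstoI)
    fix e :: real assume e: "e > 0"
    define r where "r = min e (R / 2)"
    have r: "0 < r" "r < R" "r \<le> e" unfolding r_def using e R0 by auto
    have pos: "(0::ennreal) < ennreal (\<kappa> * r)" using \<kappa>0 r(1) by simp
    from assms(6) show "eventually (\<lambda>n. dist (pn n) p < e) sequentially"
    proof
      assume lim: "(\<lambda>n. Fbar_sep M g W p (pn n)) \<longlonglongrightarrow> 0"
      have "eventually (\<lambda>n. Fbar_sep M g W p (pn n) < ennreal (\<kappa> * r)) sequentially"
        by (rule order_tendstoD(2)[OF lim pos])
      then show ?thesis
        by (rule eventually_mono) (use fwd r in fastforce)
    next
      assume lim: "(\<lambda>n. Fbar_sep M g W (pn n) p) \<longlonglongrightarrow> 0"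
      have "eventually (\<lambda>n. Fbar_sep M g W (pn n) p < ennreal (\<kappa> * r)) sequentially"
        by (rule order_tendstoD(2)[OF lim pos])
      then show ?thesis
        by (rule eventually_mono) (use bwd r in fastforce)
    qed
  qed
qed


end
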